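(* Assume that the pair $(C,A)$ is observable and that $0$ is in the interior of $\mathcal{K}_1$. Let $T>0$. Then there exist $R>0$ with $B(0,R)\subset\mathcal{K}_1$ and $\eta_1>0$ such that the following holds. Let $\delta\in C^\infty(\mathbb{R}^n,\mathbb{R})$ satisfy $\delta(0)=0$ and $\sup_{x\in\mathcal{K}_1}|\delta(x)|<\eta_1$, and let $(\hat x,\varepsilon,\xi,\omega)$ be the solution of $(\mathrm{CS}_\delta)$ with initial condition $(\hat x_0,\varepsilon_0,\xi_0,\omega_0)\in B(0,R)\times\mathbb{R}^n\times\mathcal{S}\times\mathbb{S}^{n-1}$. If $\hat x(t)\in B(0,R)$ for all $t\in[0,T]$, then the input $u:t\mapsto(\lambda+\delta)(\hat x(t))$ makes the system $\dot x=A_{u(t)}x+bu(t)$, $y=Cx$ observable in time $T$.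
   Context: Let $n\ge1$, $A,B\in\mathrm{End}(\mathbb{R}^n)$, $C\in\mathcal{L}(\mathbb{R}^n,\mathbb{R})$, $b\in\mathbb{R}^n$, $A_u=A+uB$. $(C,A)$ is observable if the matrix with rows $C,CA,\dots,CA^{n-1}$ has rank $n$. An input $u$ makes the system $\dot x=A_{u(t)}x+bu(t)$, $y=Cx$ observable in time $T$ if any two solutions with equal outputs on $[0,T]$ coincide on $[0,T]$. Let $\lambda\in C^\infty(\mathbb{R}^n,\mathbb{R})$, $\lambda(0)=0$, be such that $0$ is an asymptotically stable equilibrium of $x\mapsto A_{\lambda(x)}x+b\lambda(x)$ with open domain of attraction $D(\lambda)$. Let $\mathcal{S}$ be a finite-dimensional manifold, $L:\mathcal{S}\to\mathcal{L}(\mathbb{R},\mathbb{R}^n)$, $f(\cdot,u)$ a vector field on $\mathcal{S}$ for each $u\in\mathbb{R}$. For $\delta\in C^\infty(\mathbb{R}^n,\mathbb{R})$, $(\mathrm{CS}_\delta)$ is: $\dot{\hat x}=A_{(\lambda+\delta)(\hat x)}\hat x+b(\lambda+\delta)(\hat x)-L(\xi)C\varepsilon$, $\dot\varepsilon=(A_{(\lambda+\delta)(\hat x)}-L(\xi)C)\varepsilon$, $\dot\xi=f(\xi,(\lambda+\delta)(\hat x))$, $\dot\omega=A_{(\lambda+\delta)(\hat x)}\omega$. $\mathcal{K}=\mathcal{K}_1\times\mathcal{K}_2\times\mathcal{K}_3$ is a semi-algebraic compact subset of $D(\lambda)\times\mathbb{R}^n\times\mathcal{S}$. *)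

theory Defs
  imports "HOL-Analysis.Analysis"
begin

coinductive Cinf :: "('a::euclidean_space \<Rightarrow> real) \<Rightarrow> bool" where
  "(\<And>x. f differentiable (at x)) \<Longrightarrow>
   (\<And>e. e \<in> Basis \<Longrightarrow> Cinf (\<lambda>x. frechet_derivative f (at x) e)) \<Longrightarrow> Cinf f"

inductive poly_fun :: "(real^'n \<Rightarrow> real) \<Rightarrow> bool" where
  pf_const: "poly_fun (\<lambda>x. c)"
| pf_coord: "poly_fun (\<lambda>x. x $ i)"
| pf_add: "poly_fun p \<Longrightarrow> poly_fun q \<Longrightarrow> poly_fun (\<lambda>x. p x + q x)"
| pf_mult: "poly_fun p \<Longrightarrow> poly_fun q \<Longrightarrow> poly_fun (\<lambda>x. p x * q x)"

inductive semialgebraic :: "(real^'n) set \<Rightarrow> bool" where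
  sa_eq: "poly_fun p \<Longrightarrow> semialgebraic {x. p x = 0}"
| sa_pos: "poly_fun p \<Longrightarrow> semialgebraic {x. 0 < p x}"
| sa_union: "semialgebraic S \<Longrightarrow> semialgebraic T \<Longrightarrow> semialgebraic (S \<union> T)"
| sa_compl: "semialgebraic S \<Longrightarrow> semialgebraic (UNIV - S)"

definition matpow :: "real^'n^'n \<Rightarrow> nat \<Rightarrow> real^'n^'n" where
  "matpow M k = ((\<lambda>N. M ** N) ^^ k) (mat 1)"

definition Au :: "real^'n^'n \<Rightarrow> real^'n^'n \<Rightarrow> real \<Rightarrow> real^'n^'n" where
  "Au A B u = A + u *\<^sub>R B"

text \<open>(C,A) observable: the matrix with rows C, CA, ..., CA^(n-1) has rank n
  (rank = dimension of the span of its rows). C is a row vector, y = C \<bullet> x.\<close>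
definition observable_pair :: "real^'n \<Rightarrow> real^'n^'n \<Rightarrow> bool" where
  "observable_pair C A \<longleftrightarrow>
     dim ((\<lambda>k. C v* matpow A k) ` {..<CARD('n)}) = CARD('n)"

definition ctrl_sol :: "real^'n^'n \<Rightarrow> real^'n^'n \<Rightarrow> real^'n \<Rightarrow> (real \<Rightarrow> real) \<Rightarrow> real
    \<Rightarrow> (real \<Rightarrow> real^'n) \<Rightarrow> bool" where
  "ctrl_sol A B b u T x \<longleftrightarrow>
     (\<forall>t\<in>{0..T}. (x has_vector_derivative (Au A B (u t) *v x t + u t *\<^sub>R b)) (at t within {0..T}))"

definition observable_input :: "real^'n^'n \<Rightarrow> real^'n^'n \<Rightarrow> real^'n \<Rightarrow> real^'n
    \<Rightarrow> (real \<Rightarrow> real) \<Rightarrow> real \<Rightarrow> bool" where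
  "observable_input A B b C u T \<longleftrightarrow>
     (\<forall>x1 x2. ctrl_sol A B b u T x1 \<and> ctrl_sol A B b u T x2 \<and>
        (\<forall>t\<in>{0..T}. C \<bullet> x1 t = C \<bullet> x2 t) \<longrightarrow> (\<forall>t\<in>{0..T}. x1 t = x2 t))"

definition cl_field :: "real^'n^'n \<Rightarrow> real^'n^'n \<Rightarrow> real^'n \<Rightarrow> (real^'n \<Rightarrow> real)
    \<Rightarrow> real^'n \<Rightarrow> real^'n" where
  "cl_field A B b lam x = Au A B (lam x) *v x + lam x *\<^sub>R b"

definition fwd_sol :: "('a::real_normed_vector \<Rightarrow> 'a) \<Rightarrow> (real \<Rightarrow> 'a) \<Rightarrow> bool" where
  "fwd_sol F x \<longleftrightarrow> (\<forall>t\<ge>0. (x has_vector_derivative F (x t)) (at t within {0..}))"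

definition asympt_stable_origin :: "('a::real_normed_vector \<Rightarrow> 'a) \<Rightarrow> bool" where
  "asympt_stable_origin F \<longleftrightarrow>
     F 0 = 0 \<and>
     (\<forall>e>0. \<exists>d>0. \<forall>x0. norm x0 < d \<longrightarrow>
        (\<exists>x. x 0 = x0 \<and> fwd_sol F x) \<and>
        (\<forall>x. x 0 = x0 \<and> fwd_sol F x \<longrightarrow> (\<forall>t\<ge>0. norm (x t) < e))) \<and>
     (\<exists>r>0. \<forall>x0. norm x0 < r \<longrightarrow>
        (\<forall>x. x 0 = x0 \<and> fwd_sol F x \<longrightarrow> (x \<longlongrightarrow> 0) at_top))"

definition dom_attr :: "('a::real_normed_vector \<Rightarrow> 'a) \<Rightarrow> 'a set" where
  "dom_attr F = {x0. \<exists>x. x 0 = x0 \<and> fwd_sol F x \<and> (x \<longlongrightarrow> 0) at_top}"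

end

theory Submission
  imports Defs
begin


typedef (overloaded) 'a endo = "UNIV :: ('a::euclidean_space \<Rightarrow>\<^sub>L 'a) set" by auto

lemma endo_eqI: "Rep_endo x = Rep_endo y \<Longrightarrow> x = y"
  by (simp add: Rep_endo_inject)

instantiation endo :: (euclidean_space) real_vector
begin
definition "0 = Abs_endo 0"
definition "x + y = Abs_endo (Rep_endo x + Rep_endo y)"
definition "x - y = Abs_endo (Rep_endo x - Rep_endo y)"
definition "- x = Abs_endo (- Rep_endo x)"
definition scaleR_endo :: "real \<Rightarrow> 'a endo \<Rightarrow> 'a endo" where "scaleR_endo r x = Abs_endo (r *\<^sub>R Rep_endo x)"

lemma Rep_simps1[simp]:
  "Rep_endo 0 = 0" "Rep_endo (x + y) = Rep_endo x + Rep_endo y"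
  "Rep_endo (x - y) = Rep_endo x - Rep_endo y" "Rep_endo (- x) = - Rep_endo x"
  "Rep_endo (scaleR r x) = r *\<^sub>R Rep_endo x"
  by (simp_all add: zero_endo_def plus_endo_def minus_endo_def uminus_endo_def scaleR_endo_def
       Abs_endo_inverse)

instance
proof
  fix x y z :: "'a endo" and a b :: real
  show "x + y + z = x + (y + z)" by (rule endo_eqI) (simp add: algebra_simps)
  show "x + y = y + x" by (rule endo_eqI) (simp add: algebra_simps)
  show "0 + x = x" by (rule endo_eqI) simp
  show "- x + x = 0" by (rule endo_eqI) simp
  show "x - y = x + - y" by (rule endo_eqI) simp
  show "a *\<^sub>R (x + y) = a *\<^sub>R x + a *\<^sub>R y" by (rule endo_eqI) (simp add: algebra_simps)
  show "(a + b) *\<^sub>R x = a *\<^sub>R x + b *\<^sub>R x" by (rule endo_eqI) (simp add: algebra_simps)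
  show "a *\<^sub>R b *\<^sub>R x = (a * b) *\<^sub>R x" by (rule endo_eqI) simp
  show "1 *\<^sub>R x = x" by (rule endo_eqI) simp
qed
end

instantiation endo :: (euclidean_space) real_normed_vector
begin
definition "norm x = norm (Rep_endo x)"
definition "sgn (x::'a endo) = x /\<^sub>R norm x"
definition "dist (x::'a endo) y = norm (x - y)"
definition "uniformity = (INF e\<in>{0<..}. principal {(x::'a endo, y). dist x y < e})"
definition "open (U::'a endo set) = (\<forall>x\<in>U. \<forall>\<^sub>F (x', y) in uniformity. x' = x \<longrightarrow> y \<in> U)"
instance
proof
  fix x y :: "'a endo" and a :: real
  show "dist x y = norm (x - y)" by (simp add: dist_endo_def)
  show "sgn x = x /\<^sub>R norm x" by (simp add: sgn_endo_def)
  show "(uniformity :: ('a endo \<times> 'a endo) filter) = (INF e\<in>{0<..}. principal {(x, y). dist x y < e})"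
    by (simp add: uniformity_endo_def)
  show "open (U::'a endo set) = (\<forall>x\<in>U. \<forall>\<^sub>F (x', y) in uniformity. x' = x \<longrightarrow> y \<in> U)" for U
    by (simp add: open_endo_def)
  show "norm x = 0 \<longleftrightarrow> x = 0" by (simp add: norm_endo_def Rep_endo_inject[symmetric])
  show "norm (x + y) \<le> norm x + norm y" by (simp add: norm_endo_def norm_triangle_ineq)
  show "norm (a *\<^sub>R x) = \<bar>a\<bar> * norm x" by (simp add: norm_endo_def)
qed
end

lemma dist_Rep: "dist x y = dist (Rep_endo x) (Rep_endo y)"
  by (simp add: dist_endo_def norm_endo_def dist_norm)

instantiation endo :: (euclidean_space) real_normed_algebra_1
begin
definition "x * y = Abs_endo (Rep_endo x o\<^sub>L Rep_endo y)"
definition "1 = Abs_endo id_blinfun"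

lemma Rep_simps2[simp]:
  "Rep_endo (x * y) = Rep_endo x o\<^sub>L Rep_endo y"
  "Rep_endo 1 = id_blinfun"
  by (simp_all add: times_endo_def one_endo_def Abs_endo_inverse)

instance
proof
  fix x y z :: "'a endo" and a b :: real
  show "x * y * z = x * (y * z)" by (rule endo_eqI, rule blinfun_eqI) simp
  show "(x + y) * z = x * z + y * z" by (rule endo_eqI, rule blinfun_eqI) (simp add: blinfun.add_left)
  show "x * (y + z) = x * y + x * z" by (rule endo_eqI, rule blinfun_eqI) (simp add: blinfun.add_left blinfun.add_right)
  show "a *\<^sub>R x * y = a *\<^sub>R (x * y)" by (rule endo_eqI, rule blinfun_eqI) (simp add: blinfun.scaleR_left)
  show "x * a *\<^sub>R y = a *\<^sub>R (x * y)" by (rule endo_eqI, rule blinfun_eqI) (simp add: blinfun.scaleR_left blinfun.scaleR_right)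
  show "1 * x = x" by (rule endo_eqI, rule blinfun_eqI) simp
  show "x * 1 = x" by (rule endo_eqI, rule blinfun_eqI) simp
  show "(0::'a endo) \<noteq> 1"
  proof
    assume "(0::'a endo) = 1"
    then have "Rep_endo (0::'a endo) = Rep_endo 1" by simp
    then have "norm (0::'a \<Rightarrow>\<^sub>L 'a) = norm (id_blinfun::'a \<Rightarrow>\<^sub>L 'a)" by simp
    then show False by simp
  qed
  show "norm (x * y) \<le> norm x * norm y" by (simp add: norm_endo_def norm_blinfun_compose)
  show "norm (1::'a endo) = 1" by (simp add: norm_endo_def)
qed
end

instance endo :: (euclidean_space) banach
proof
  fix X :: "nat \<Rightarrow> 'a endo"
  assume "Cauchy X"
  then have "Cauchy (\<lambda>n. Rep_endo (X n))" by (simp add: Cauchy_def dist_Rep)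
  then obtain L where L: "(\<lambda>n. Rep_endo (X n)) \<longlonglongrightarrow> L" using convergent_def Cauchy_convergent_iff by blast
  have "X \<longlonglongrightarrow> Abs_endo L"
    using L by (simp add: tendsto_iff dist_Rep Abs_endo_inverse)
  then show "convergent X" by (auto simp: convergent_def)
qed



definition act :: "'a::euclidean_space endo \<Rightarrow> 'a \<Rightarrow> 'a" where
  "act X v = blinfun_apply (Rep_endo X) v"

definition mop :: "real^'n^'n \<Rightarrow> (real^'n) endo" where
  "mop M = Abs_endo (Blinfun (\<lambda>x. M *v x))"

lemma act_mop[simp]: "act (mop M) v = M *v v"
  by (simp add: act_def mop_def Abs_endo_inverse bounded_linear_Blinfun_apply)

lemma act_mult[simp]: "act (X * Y) v = act X (act Y v)"
  by (simp add: act_def)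

lemma act_one[simp]: "act 1 v = v"
  by (simp add: act_def)

lemma norm_act: "norm (act X v) \<le> norm X * norm v"
  by (simp add: act_def norm_endo_def norm_blinfun)

lemma bb_act: "bounded_bilinear act"
proof
  fix a a' :: "'a endo" and b b' :: 'a and r :: real
  show "act (a + a') b = act a b + act a' b" by (simp add: act_def blinfun.add_left)
  show "act a (b + b') = act a b + act a b'" by (simp add: act_def blinfun.add_right)
  show "act (r *\<^sub>R a) b = r *\<^sub>R act a b" by (simp add: act_def blinfun.scaleR_left)
  show "act a (r *\<^sub>R b) = r *\<^sub>R act a b" by (simp add: act_def blinfun.scaleR_right)
next
  show "\<exists>K. \<forall>a b. norm (act a b) \<le> norm a * norm b * K"
    by (rule exI[of _ 1]) (simp add: norm_act)
qed

lemma act_pow: "act (mop A ^ k) v = matpow A k *v v"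
proof (induction k arbitrary: v)
  case 0
  then show ?case by (simp add: matpow_def)
next
  case (Suc k)
  have "act (mop A ^ Suc k) v = A *v (matpow A k *v v)"
    by (simp add: Suc)
  also have "\<dots> = matpow A (Suc k) *v v"
    by (simp add: matpow_def matrix_vector_mul_assoc)
  finally show ?case .
qed



lemma obs_span: "observable_pair C (A::real^'n^'n) \<Longrightarrow> span ((\<lambda>k. C v* matpow A k) ` {..<CARD('n)}) = UNIV"
  unfolding observable_pair_def
  using dim_eq_full by fastforce

lemma obs_inj:
  assumes "observable_pair C (A::real^'n^'n)" and "\<And>k. C \<bullet> (matpow A k *v v) = 0"
  shows "v = 0"
proof -
  have "\<forall>w\<in>(\<lambda>k. C v* matpow A k) ` {..<CARD('n)}. w \<bullet> v = 0"
    using assms(2) by (auto simp: dot_lmul_matrix)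
  then have "\<forall>w\<in>span ((\<lambda>k. C v* matpow A k) ` {..<CARD('n)}). w \<bullet> v = 0"
    using span_induct[of _ "(\<lambda>k. C v* matpow A k) ` {..<CARD('n)}" "\<lambda>w. w \<bullet> v = 0"]
    by (auto simp: subspace_def inner_add_left)
  then have "v \<bullet> v = 0" using obs_span[OF assms(1)] by auto
  then show ?thesis by simp
qed

lemma obs_zero:
  fixes A :: "real^'n^'n"
  assumes obs: "observable_pair C A" and T: "T > 0"
    and z: "\<forall>t\<in>{0..T}. C \<bullet> act (exp (t *\<^sub>R mop A)) v = 0"
  shows "v = 0"
proof -
  define G where "G = (\<lambda>k t. C \<bullet> act (mop A ^ k * exp (t *\<^sub>R mop A)) v)"
  have der: "(G k has_vector_derivative G (Suc k) t) (at t within {0..T})" for k t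
  proof -
    have bl: "bounded_linear (\<lambda>X. C \<bullet> act (mop A ^ k * X) v)"
    proof -
      have "bounded_linear (\<lambda>X. act (mop A ^ k * X) v)"
        using bounded_bilinear.bounded_linear_left[OF bb_act]
          bounded_linear_compose bounded_linear_mult_right by blast
      then show ?thesis using bounded_linear_inner_right bounded_linear_compose by blast
    qed
    have "((\<lambda>t. C \<bullet> act (mop A ^ k * exp (t *\<^sub>R mop A)) v) has_vector_derivative
        C \<bullet> act (mop A ^ k * (mop A * exp (t *\<^sub>R mop A))) v) (at t within {0..T})"
      by (rule bounded_linear.has_vector_derivative[OF bl,
            OF has_vector_derivative_at_within[OF exp_scaleR_has_vector_derivative_left]])
    then show ?thesis by (simp only: G_def power_Suc2 mult.assoc)
  qed
  have "\<forall>t\<in>{0..T}. G k t = 0" for k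
  proof (induction k)
    case 0
    then show ?case using z by (simp add: G_def)
  next
    case (Suc k)
    show ?case
    proof
      fix t assume t: "t \<in> {0..T}"
      have z0: "((\<lambda>t. 0) has_vector_derivative 0) (at t within {0..T})" by simp
      have d0: "(G k has_vector_derivative 0) (at t within {0..T})"
        by (rule has_vector_derivative_transform[OF t _ z0]) (use Suc in auto)
      have "G (Suc k) t = 0"
        by (rule vector_derivative_unique_within_closed_interval[of 0 T t "G k", unfolded cbox_interval])
          (use T t der d0 in auto)
      then show "G (Suc k) t = 0" .
    qed
  qed
  then have "C \<bullet> (matpow A k *v v) = 0" for k
  proof -
    have "G k 0 = 0" using \<open>\<forall>t\<in>{0..T}. G k t = 0\<close> T by simp
    then show ?thesis by (simp add: G_def act_pow)
  qed
  then show ?thesis using obs_inj[OF obs] by blast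
qed



lemma bl_F: "bounded_linear (\<lambda>v. C \<bullet> act X v)"
  using bounded_linear_inner_right bounded_bilinear.bounded_linear_right[OF bb_act]
    bounded_linear_compose by blast

lemma obs_lower:
  fixes A :: "real^'n^'n"
  assumes obs: "observable_pair C A" and T: "T > 0"
  shows "\<exists>c>0. \<forall>v. \<exists>t\<in>{0..T}. c * norm v \<le> \<bar>C \<bullet> act (exp (t *\<^sub>R mop A)) v\<bar>"
proof (rule ccontr)
  define F where "F t v = C \<bullet> act (exp (t *\<^sub>R mop A)) v" for t v
  have blF: "bounded_linear (F t)" for t unfolding F_def by (rule bl_F)
  assume "\<not> ?thesis"
  then have H: "\<forall>c>0. \<exists>v. \<forall>t\<in>{0..T}. \<bar>F t v\<bar> < c * norm v"
    by (force simp: F_def not_le)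
  have "\<exists>w. norm w = 1 \<and> (\<forall>t\<in>{0..T}. \<bar>F t w\<bar> < 1 / Suc k)" for k
  proof -
    obtain v where v: "\<forall>t\<in>{0..T}. \<bar>F t v\<bar> < (1 / Suc k) * norm v"
      using H by (meson divide_pos_pos of_nat_0_less_iff zero_less_Suc zero_less_one)
    have "v \<noteq> 0" using v T by (auto dest!: bspec[of _ _ 0] simp: linear_simps(3)[OF blF])
    then have nv: "norm v > 0" by simp
    have "\<forall>t\<in>{0..T}. \<bar>F t (v /\<^sub>R norm v)\<bar> < 1 / Suc k"
    proof
      fix t assume t: "t \<in> {0..T}"
      have "\<bar>F t (v /\<^sub>R norm v)\<bar> = \<bar>F t v\<bar> / norm v"
        using nv by (simp add: linear_simps(5)[OF blF] divide_inverse_commute abs_mult)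
      also have "\<dots> < 1 / Suc k" using v t nv by (simp add: pos_divide_less_eq)
      finally show "\<bar>F t (v /\<^sub>R norm v)\<bar> < 1 / Suc k" .
    qed
    then show ?thesis using nv by (intro exI[of _ "v /\<^sub>R norm v"]) simp
  qed
  then obtain w where w: "\<And>k. norm (w k) = 1" "\<And>k t. t \<in> {0..T} \<Longrightarrow> \<bar>F t (w k)\<bar> < 1 / Suc k"
    by metis
  have "\<forall>k. w k \<in> sphere 0 1" using w(1) by simp
  then obtain l r where l: "l \<in> sphere 0 1" and r: "strict_mono r" and lim: "(w \<circ> r) \<longlonglongrightarrow> l"
    using compact_sphere[of "0::real^'n" 1, unfolded compact_eq_seq_compact_metric seq_compact_def]
    by blast
  have "\<forall>t\<in>{0..T}. F t l = 0"
  proof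
    fix t assume t: "t \<in> {0..T}"
    have L1: "(\<lambda>k. \<bar>F t (w (r k))\<bar>) \<longlonglongrightarrow> \<bar>F t l\<bar>"
      using bounded_linear.tendsto[OF blF lim] by (intro tendsto_rabs) (simp add: o_def)
    have L2: "(\<lambda>k. 1 / real (Suc k)) \<longlonglongrightarrow> 0"
      using LIMSEQ_inverse_real_of_nat by (simp add: inverse_eq_divide)
    have "\<forall>k. \<bar>F t (w (r k))\<bar> \<le> 1 / real (Suc k)"
    proof
      fix k
      have "k \<le> r k" using r by (rule seq_suble)
      then have "1 / real (Suc (r k)) \<le> 1 / real (Suc k)"
        by (simp add: frac_le)
      then show "\<bar>F t (w (r k))\<bar> \<le> 1 / real (Suc k)" using w(2)[OF t, of "r k"] by linarith
    qed
    then have "\<bar>F t l\<bar> \<le> 0" using LIMSEQ_le[OF L1 L2] by blast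
    then show "F t l = 0" by simp
  qed
  then have "l = 0" using obs_zero[OF obs T] by (simp add: F_def)
  then show False using l by simp
qed



lemma Au_mult: "Au A B u *v w = A *v w + u *\<^sub>R (B *v w)"
  by (simp add: Au_def matrix_vector_mult_add_rdistrib scaleR_matrix_vector_assoc)

lemma norm_exp_le:
  assumes "s \<in> {0..T}"
  shows "norm (exp (s *\<^sub>R (X::'a::euclidean_space endo))) \<le> exp (T * norm X)"
proof -
  have "norm (exp (s *\<^sub>R X)) \<le> exp (norm (s *\<^sub>R X))" by (rule norm_exp)
  also have "\<dots> \<le> exp (T * norm X)" using assms by (auto intro!: mult_right_mono)
  finally show ?thesis .
qed

lemma key_est:
  fixes A B :: "real^'n^'n" and e :: "real \<Rightarrow> real^'n"
  assumes de: "\<And>t. t \<in> {0..T} \<Longrightarrow> (e has_vector_derivative (Au A B (u t) *v e t)) (at t within {0..T})"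
    and ub: "\<And>t. t \<in> {0..T} \<Longrightarrow> \<bar>u t\<bar> \<le> \<epsilon>"
    and Mb: "\<And>t. t \<in> {0..T} \<Longrightarrow> norm (e t) \<le> M"
    and tau: "\<tau> \<in> {0..T}"
  shows "norm (e \<tau> - act (exp (\<tau> *\<^sub>R mop A)) (e 0)) \<le> exp (T * norm (mop A)) * (\<epsilon> * (norm (mop B) * M)) * T"
proof -
  define E where "E = (\<lambda>s. exp ((\<tau> - s) *\<^sub>R mop A))"
  define h where "h s = act (E s) (e s)" for s
  define Bd where "Bd = exp (T * norm (mop A)) * (\<epsilon> * (norm (mop B) * M))"
  have sub: "{0..\<tau>} \<subseteq> {0..T}" using tau by auto
  have dE: "(E has_vector_derivative (- (E s * mop A))) (at s within {0..\<tau>})" for s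
  proof -
    have "((\<lambda>s. \<tau> - s) has_vector_derivative -1) (at s within {0..\<tau>})"
      by (auto intro!: derivative_eq_intros)
    from vector_diff_chain_within[OF this exp_scaleR_has_vector_derivative_right]
    show ?thesis by (simp add: E_def o_def)
  qed
  have dh: "(h has_vector_derivative act (E s) (u s *\<^sub>R (B *v e s))) (at s within {0..\<tau>})"
    if s: "s \<in> {0..\<tau>}" for s
  proof -
    have des: "(e has_vector_derivative (Au A B (u s) *v e s)) (at s within {0..\<tau>})"
      using has_vector_derivative_within_subset[OF de sub] s sub by auto
    from bounded_bilinear.has_vector_derivative[OF bb_act dE des]
    have "(h has_vector_derivative act (E s) (Au A B (u s) *v e s) + act (- (E s * mop A)) (e s))
       (at s within {0..\<tau>})" by (simp add: h_def[abs_def])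
    moreover have "act (E s) (Au A B (u s) *v e s) + act (- (E s * mop A)) (e s) = act (E s) (u s *\<^sub>R (B *v e s))"
    proof -
      have 1: "act (- (E s * mop A)) (e s) = - act (E s) (A *v e s)"
        by (simp add: bounded_bilinear.minus_left[OF bb_act])
      have 2: "act (E s) (Au A B (u s) *v e s) = act (E s) (A *v e s) + act (E s) (u s *\<^sub>R (B *v e s))"
        by (simp add: Au_mult bounded_bilinear.add_right[OF bb_act])
      show ?thesis unfolding 1 2 by simp
    qed
    ultimately show ?thesis by simp
  qed
  have bnd: "norm (act (E s) (u s *\<^sub>R (B *v e s))) \<le> Bd" if s: "s \<in> {0..\<tau>}" for s
  proof -
    have sT: "s \<in> {0..T}" using s sub by auto
    have "norm (act (E s) (u s *\<^sub>R (B *v e s))) \<le> norm (E s) * (\<bar>u s\<bar> * norm (B *v e s))"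
      using norm_act[of "E s" "u s *\<^sub>R (B *v e s)"] by simp
    also have "\<dots> \<le> exp (T * norm (mop A)) * (\<epsilon> * (norm (mop B) * M))"
    proof (rule mult_mono)
      show "norm (E s) \<le> exp (T * norm (mop A))"
        unfolding E_def by (rule norm_exp_le) (use s tau in auto)
      have "norm (B *v e s) \<le> norm (mop B) * M"
        using norm_act[of "mop B" "e s"] Mb[OF sT]
        by (metis act_mop mult_left_mono norm_ge_zero order_trans)
      then show "\<bar>u s\<bar> * norm (B *v e s) \<le> \<epsilon> * (norm (mop B) * M)"
        using ub[OF sT] by (meson abs_ge_zero mult_mono norm_ge_zero order_trans)
    qed auto
    finally show ?thesis by (simp add: Bd_def)
  qed
  have "norm (h \<tau> - h 0) \<le> Bd * norm (\<tau> - 0)"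
  proof (rule differentiable_bound[where f' = "\<lambda>s x. x *\<^sub>R act (E s) (u s *\<^sub>R (B *v e s))"])
    show "convex {0..\<tau>}" by simp
    show "(h has_derivative (\<lambda>x. x *\<^sub>R act (E s) (u s *\<^sub>R (B *v e s)))) (at s within {0..\<tau>})"
      if "s \<in> {0..\<tau>}" for s using dh[OF that] by (simp add: has_vector_derivative_def)
    show "onorm (\<lambda>x. x *\<^sub>R act (E s) (u s *\<^sub>R (B *v e s))) \<le> Bd" if "s \<in> {0..\<tau>}" for s
      using bnd[OF that] onorm_scaleR_left[OF bounded_linear_ident, of "act (E s) (u s *\<^sub>R (B *v e s))"]
      by (simp add: onorm_id)
  qed (use tau in auto)
  moreover have "h \<tau> = e \<tau>" by (simp add: h_def E_def)
  moreover have "h 0 = act (exp (\<tau> *\<^sub>R mop A)) (e 0)" by (simp add: h_def E_def)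
  moreover have "Bd * norm (\<tau> - 0) \<le> Bd * T"
  proof (rule mult_left_mono)
    show "norm (\<tau> - 0) \<le> T" using tau by auto
    have "0 \<le> norm (e 0)" by simp
    then have "0 \<le> M" using Mb[of 0] tau by (meson atLeastAtMost_iff order.trans order_refl)
    moreover have "0 \<le> \<epsilon>" using ub[of 0] tau by auto
    ultimately show "0 \<le> Bd" by (simp add: Bd_def)
  qed
  ultimately have "norm (e \<tau> - act (exp (\<tau> *\<^sub>R mop A)) (e 0)) \<le> Bd * T"
    by (metis order.trans)
  then show ?thesis by (simp only: Bd_def)
qed



lemma core:
  fixes A B :: "real^'n^'n" and b C :: "real^'n"
  assumes obs: "observable_pair C A" and T: "T > 0"
  shows "\<exists>\<epsilon>>0. \<forall>u. (\<forall>t\<in>{0..T}. \<bar>u t\<bar> \<le> \<epsilon>) \<longrightarrow> observable_input A B b C u T"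
proof -
  obtain c where c: "c > 0" and hc: "\<And>v. \<exists>t\<in>{0..T}. c * norm v \<le> \<bar>C \<bullet> act (exp (t *\<^sub>R mop A)) v\<bar>"
    using obs_lower[OF obs T] by blast
  define X where "X = exp (T * norm (mop A))"
  define K where "K = X * norm (mop B) * T"
  define K' where "K' = K * (X * norm C / c + 1)"
  define \<epsilon> where "\<epsilon> = 1 / (2 * (K' + 1))"
  have X0: "X > 0" by (simp add: X_def)
  have K0: "K \<ge> 0" using X0 T by (simp add: K_def)
  have K'0: "K' \<ge> 0" using K0 X0 c by (simp add: K'_def)
  have eps0: "\<epsilon> > 0" using K'0 by (simp add: \<epsilon>_def)
  have epsK: "\<epsilon> * K' \<le> 1 / 2" using K'0 by (simp add: \<epsilon>_def field_simps)
  have "\<forall>u. (\<forall>t\<in>{0..T}. \<bar>u t\<bar> \<le> \<epsilon>) \<longrightarrow> observable_input A B b C u T"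
  proof (intro allI impI)
    fix u assume ub: "\<forall>t\<in>{0..T}. \<bar>u t\<bar> \<le> \<epsilon>"
    show "observable_input A B b C u T"
      unfolding observable_input_def
    proof (intro allI impI)
      fix x1 x2 assume H: "ctrl_sol A B b u T x1 \<and> ctrl_sol A B b u T x2 \<and> (\<forall>t\<in>{0..T}. C \<bullet> x1 t = C \<bullet> x2 t)"
      define e where "e t = x1 t - x2 t" for t
      have de: "(e has_vector_derivative (Au A B (u t) *v e t)) (at t within {0..T})" if t: "t \<in> {0..T}" for t
      proof -
        have "((\<lambda>t. x1 t - x2 t) has_vector_derivative
          (Au A B (u t) *v x1 t + u t *\<^sub>R b) - (Au A B (u t) *v x2 t + u t *\<^sub>R b)) (at t within {0..T})"
          using H t unfolding ctrl_sol_def by (intro has_vector_derivative_diff) auto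
        then show ?thesis by (simp add: e_def[abs_def] matrix_vector_mult_diff_distrib)
      qed
      have Ce: "C \<bullet> e t = 0" if "t \<in> {0..T}" for t
        using H that by (simp add: e_def inner_diff_right)
      have cont: "continuous_on {0..T} e"
        using de has_vector_derivative_continuous continuous_on_eq_continuous_within by blast
      obtain tm where tm: "tm \<in> {0..T}" and tmax: "\<And>s. s \<in> {0..T} \<Longrightarrow> norm (e s) \<le> norm (e tm)"
      proof -
        have "continuous_on {0..T} (\<lambda>s. norm (e s))" using cont by (rule continuous_on_norm)
        then have "\<exists>x\<in>{0..T}. \<forall>y\<in>{0..T}. norm (e y) \<le> norm (e x)"
          using continuous_attains_sup[of "{0..T}" "\<lambda>s. norm (e s)"] T by simp
        then show ?thesis using that by blast
      qed
      define M where "M = norm (e tm)"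
      have M0: "M \<ge> 0" by (simp add: M_def)
      have est: "norm (e \<tau> - act (exp (\<tau> *\<^sub>R mop A)) (e 0)) \<le> \<epsilon> * K * M" if "\<tau> \<in> {0..T}" for \<tau>
      proof -
        have "norm (e \<tau> - act (exp (\<tau> *\<^sub>R mop A)) (e 0)) \<le> X * (\<epsilon> * (norm (mop B) * M)) * T"
          unfolding X_def
          by (rule key_est[OF de]) (use ub tmax that in \<open>auto simp: M_def\<close>)
        then show ?thesis by (simp add: K_def algebra_simps)
      qed
      obtain \<tau>0 where t0: "\<tau>0 \<in> {0..T}" and ht0: "c * norm (e 0) \<le> \<bar>C \<bullet> act (exp (\<tau>0 *\<^sub>R mop A)) (e 0)\<bar>"
        using hc by blast
      have "\<bar>C \<bullet> act (exp (\<tau>0 *\<^sub>R mop A)) (e 0)\<bar> = \<bar>C \<bullet> (e \<tau>0 - act (exp (\<tau>0 *\<^sub>R mop A)) (e 0))\<bar>"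
        using Ce[OF t0] by (simp add: inner_diff_right)
      also have "\<dots> \<le> norm C * norm (e \<tau>0 - act (exp (\<tau>0 *\<^sub>R mop A)) (e 0))"
        by (rule Cauchy_Schwarz_ineq2)
      also have "\<dots> \<le> norm C * (\<epsilon> * K * M)"
        using est[OF t0] by (simp add: mult_left_mono)
      finally have "c * norm (e 0) \<le> norm C * (\<epsilon> * K * M)" using ht0 by linarith
      then have e0: "norm (e 0) \<le> norm C * (\<epsilon> * K * M) / c" using c by (simp add: field_simps)
      have "M \<le> norm (act (exp (tm *\<^sub>R mop A)) (e 0)) + \<epsilon> * K * M"
        using est[OF tm] norm_triangle_sub[of "e tm" "act (exp (tm *\<^sub>R mop A)) (e 0)"]
        unfolding M_def by linarith
      also have "norm (act (exp (tm *\<^sub>R mop A)) (e 0)) \<le> X * norm (e 0)"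
      proof -
        have "norm (exp (tm *\<^sub>R mop A)) \<le> X" using norm_exp_le[OF tm, of "mop A"] by (simp add: X_def)
        then show ?thesis by (rule order_trans[OF norm_act mult_right_mono]) simp
      qed
      also have "X * norm (e 0) \<le> X * (norm C * (\<epsilon> * K * M) / c)"
        using mult_left_mono[OF e0, of X] X0 by simp
      finally have "M \<le> \<epsilon> * K' * M"
        by (simp add: K'_def algebra_simps)
      also have "\<dots> \<le> (1/2) * M" by (rule mult_right_mono[OF epsK M0])
      finally have "M \<le> 0" by simp
      show "\<forall>t\<in>{0..T}. x1 t = x2 t"
      proof
        fix t assume "t \<in> {0..T}"
        then have "norm (e t) \<le> M" using tmax M_def by simp
        then have "norm (e t) \<le> 0" using \<open>M \<le> 0\<close> by linarith
        then show "x1 t = x2 t" by (simp add: e_def)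
      qed
    qed
  qed
  then show ?thesis using eps0 by blast
qed



lemma Cinf_cont: "Cinf f \<Longrightarrow> isCont f x"
  by (erule Cinf.cases) (simp add: differentiable_imp_continuous_within)

theorem proposition3:
  fixes A B :: "real^'n^'n" and C b :: "real^'n"
    and lam :: "real^'n \<Rightarrow> real"
    and S :: "'s::euclidean_space set"
    and L :: "'s \<Rightarrow> real^'n"
    and f :: "'s \<Rightarrow> real \<Rightarrow> 's"
    and K1 :: "(real^'n) set" and K2 :: "(real^'n) set" and K3 :: "'s set"
    and T :: real
  assumes lam_smooth: "Cinf lam" and lam0: "lam 0 = 0"
    and stable: "asympt_stable_origin (cl_field A B b lam)"
    and L_smooth: "\<And>i. Cinf (\<lambda>\<xi>. L \<xi> $ i)"
    and f_smooth: "\<And>u e. e \<in> Basis \<Longrightarrow> Cinf (\<lambda>\<xi>. f \<xi> u \<bullet> e)"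
    and K_sub: "K1 \<subseteq> dom_attr (cl_field A B b lam)" "K3 \<subseteq> S"
    and K_compact: "compact K1" "compact K2" "compact K3"
    and K_semialg: "semialgebraic K1" "semialgebraic K2"
    and obs: "observable_pair C A"
    and int0: "0 \<in> interior K1"
    and T_pos: "T > 0"
  shows "\<exists>R>0. ball 0 R \<subseteq> K1 \<and> (\<exists>\<eta>1>0.
     \<forall>(\<delta>::real^'n \<Rightarrow> real) xh eps xi om.
       Cinf \<delta> \<and> \<delta> 0 = 0 \<and> (SUP x\<in>K1. \<bar>\<delta> x\<bar>) < \<eta>1 \<and>
       xh 0 \<in> ball 0 R \<and> xi 0 \<in> S \<and> om 0 \<in> sphere 0 1 \<and>
       (\<forall>t\<in>{0..T}. xi t \<in> S) \<and>
       (\<forall>t\<in>{0..T}.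
          (xh has_vector_derivative
             (Au A B (lam (xh t) + \<delta> (xh t)) *v xh t + (lam (xh t) + \<delta> (xh t)) *\<^sub>R b
              - (C \<bullet> eps t) *\<^sub>R L (xi t))) (at t within {0..T}) \<and>
          (eps has_vector_derivative
             (Au A B (lam (xh t) + \<delta> (xh t)) *v eps t - (C \<bullet> eps t) *\<^sub>R L (xi t)))
             (at t within {0..T}) \<and>
          (xi has_vector_derivative f (xi t) (lam (xh t) + \<delta> (xh t))) (at t within {0..T}) \<and>
          (om has_vector_derivative Au A B (lam (xh t) + \<delta> (xh t)) *v om t)
             (at t within {0..T})) \<and>
       (\<forall>t\<in>{0..T}. xh t \<in> ball 0 R)
       \<longrightarrow> observable_input A B b C (\<lambda>t. lam (xh t) + \<delta> (xh t)) T)"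
proof -
  obtain \<epsilon> where eps: "\<epsilon> > 0"
    and core_u: "\<And>u. (\<forall>t\<in>{0..T}. \<bar>u t\<bar> \<le> \<epsilon>) \<Longrightarrow> observable_input A B b C u T"
    using core[OF obs T_pos, of B b] by blast
  have "isCont lam 0" using lam_smooth by (rule Cinf_cont)
  then obtain d where d: "d > 0" and hd: "\<And>x. dist x 0 < d \<Longrightarrow> dist (lam x) (lam 0) < \<epsilon> / 2"
    using eps unfolding continuous_at_eps_delta by (metis half_gt_zero)
  obtain r where r: "r > 0" and hr: "ball 0 r \<subseteq> K1"
    using int0 mem_interior by blast
  define R where "R = min d r"
  have R0: "R > 0" using d r by (simp add: R_def)
  have RK: "ball 0 R \<subseteq> K1" using hr by (auto simp: R_def)
  have "\<forall>(\<delta>::real^'n \<Rightarrow> real) xh eps xi om.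
       Cinf \<delta> \<and> \<delta> 0 = 0 \<and> (SUP x\<in>K1. \<bar>\<delta> x\<bar>) < \<epsilon> / 2 \<and>
       xh 0 \<in> ball 0 R \<and> xi 0 \<in> S \<and> om 0 \<in> sphere 0 1 \<and>
       (\<forall>t\<in>{0..T}. xi t \<in> S) \<and>
       (\<forall>t\<in>{0..T}.
          (xh has_vector_derivative
             (Au A B (lam (xh t) + \<delta> (xh t)) *v xh t + (lam (xh t) + \<delta> (xh t)) *\<^sub>R b
              - (C \<bullet> eps t) *\<^sub>R L (xi t))) (at t within {0..T}) \<and>
          (eps has_vector_derivative
             (Au A B (lam (xh t) + \<delta> (xh t)) *v eps t - (C \<bullet> eps t) *\<^sub>R L (xi t)))
             (at t within {0..T}) \<and>
          (xi has_vector_derivative f (xi t) (lam (xh t) + \<delta> (xh t))) (at t within {0..T}) \<and>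
          (om has_vector_derivative Au A B (lam (xh t) + \<delta> (xh t)) *v om t)
             (at t within {0..T})) \<and>
       (\<forall>t\<in>{0..T}. xh t \<in> ball 0 R)
       \<longrightarrow> observable_input A B b C (\<lambda>t. lam (xh t) + \<delta> (xh t)) T"
  proof (intro allI impI)
    fix \<delta> :: "real^'n \<Rightarrow> real" and xh :: "real \<Rightarrow> real^'n" and eps :: "real \<Rightarrow> real^'n"
      and xi :: "real \<Rightarrow> 's" and om :: "real \<Rightarrow> real^'n"
    assume H: "Cinf \<delta> \<and> \<delta> 0 = 0 \<and> (SUP x\<in>K1. \<bar>\<delta> x\<bar>) < \<epsilon> / 2 \<and>
       xh 0 \<in> ball 0 R \<and> xi 0 \<in> S \<and> om 0 \<in> sphere 0 1 \<and>
       (\<forall>t\<in>{0..T}. xi t \<in> S) \<and>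
       (\<forall>t\<in>{0..T}.
          (xh has_vector_derivative
             (Au A B (lam (xh t) + \<delta> (xh t)) *v xh t + (lam (xh t) + \<delta> (xh t)) *\<^sub>R b
              - (C \<bullet> eps t) *\<^sub>R L (xi t))) (at t within {0..T}) \<and>
          (eps has_vector_derivative
             (Au A B (lam (xh t) + \<delta> (xh t)) *v eps t - (C \<bullet> eps t) *\<^sub>R L (xi t)))
             (at t within {0..T}) \<and>
          (xi has_vector_derivative f (xi t) (lam (xh t) + \<delta> (xh t))) (at t within {0..T}) \<and>
          (om has_vector_derivative Au A B (lam (xh t) + \<delta> (xh t)) *v om t)
             (at t within {0..T})) \<and>
       (\<forall>t\<in>{0..T}. xh t \<in> ball 0 R)"
    have cd: "continuous_on K1 (\<lambda>x. \<bar>\<delta> x\<bar>)"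
      using H Cinf_cont by (intro continuous_on_rabs continuous_at_imp_continuous_on) blast
    have bdd: "bdd_above ((\<lambda>x. \<bar>\<delta> x\<bar>) ` K1)"
      using compact_continuous_image[OF cd K_compact(1)] by (simp add: bounded_imp_bdd_above compact_imp_bounded)
    show "observable_input A B b C (\<lambda>t. lam (xh t) + \<delta> (xh t)) T"
    proof (rule core_u, rule ballI)
      fix t assume t: "t \<in> {0..T}"
      have xb: "xh t \<in> ball 0 R" using H t by blast
      then have "dist (xh t) 0 < d" by (simp add: R_def dist_commute)
      then have l: "\<bar>lam (xh t)\<bar> < \<epsilon> / 2" using hd lam0 by fastforce
      have "xh t \<in> K1" using xb RK by blast
      then have "\<bar>\<delta> (xh t)\<bar> \<le> (SUP x\<in>K1. \<bar>\<delta> x\<bar>)" using bdd by (rule cSUP_upper)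
      then have "\<bar>\<delta> (xh t)\<bar> < \<epsilon> / 2" using H by linarith
      then show "\<bar>lam (xh t) + \<delta> (xh t)\<bar> \<le> \<epsilon>" using l by linarith
    qed
  qed
  then show ?thesis using R0 RK eps by (intro exI[of _ R] conjI exI[of _ "\<epsilon>/2"]) auto
qed

end
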